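(* Let $m\ge1$ and $l\ge1$ be integers. For every $k=0,1,\dots,m$, \[ \left(\prod_{\substack{p\le m\\ p\text{ prime}}}p^{\lfloor m/p\rfloor v_p(l!)-v_p(l)}\right)^{-1}B^*_{k,0}(t)\in\mathbb{Z}[t]. \]
   Context: $v_p$ is the $p$-adic valuation. For $k=0,\dots,m$ let $l^{(k)}_h=l$ for $h\ne k$ and $l^{(k)}_k=l-1$ ($h=0,\dots,m$), and $L=(m+1)l-1$. For $j,k\in\{0,\dots,m\}$ define $\sigma^{(k,j)}_i$ by $\prod_{h=0}^m(h-j-w)^{l^{(k)}_h}=\sum_{i=0}^L\sigma^{(k,j)}_iw^i$, and \[ B^*_{k,j}(t)=\frac{1}{(l-1)!}\sum_{i=0}^{L}t^{L-i}\,i!\,\sigma^{(k,j)}_i \] (equivalently $B^*_{k,j}(t)=\frac{t^{L+1}}{(l-1)!}\int_0^\infty e^{-yt}\prod_{h=0}^m(h-j-y)^{l^{(k)}_h}\,dy$ for $t>0$). *)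

theory Defs
  imports "HOL-Computational_Algebra.Computational_Algebra"
begin

definition lexp :: "nat \<Rightarrow> nat \<Rightarrow> nat \<Rightarrow> nat" where
  "lexp l k h = (if h = k then l - 1 else l)"

definition bigL :: "nat \<Rightarrow> nat \<Rightarrow> nat" where
  "bigL m l = (m + 1) * l - 1"

definition Pkj :: "nat \<Rightarrow> nat \<Rightarrow> nat \<Rightarrow> nat \<Rightarrow> int poly" where
  "Pkj m l k j = (\<Prod>h\<in>{0..m}. [: int h - int j, -1 :] ^ lexp l k h)"

definition sigma :: "nat \<Rightarrow> nat \<Rightarrow> nat \<Rightarrow> nat \<Rightarrow> nat \<Rightarrow> int" where
  "sigma m l k j i = coeff (Pkj m l k j) i"

definition Bstar :: "nat \<Rightarrow> nat \<Rightarrow> nat \<Rightarrow> nat \<Rightarrow> rat poly" where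
  "Bstar m l k j = smult (1 / of_nat (fact (l - 1)))
     (\<Sum>i\<in>{0..bigL m l}. monom (of_nat (fact i) * of_int (sigma m l k j i)) (bigL m l - i))"

text \<open>The normalising constant prod_{p <= m prime} p^(floor(m/p) v_p(l!) - v_p(l)).
 For p <= m and l >= 1 the exponent is nonnegative, so truncated subtraction is harmless.\<close>
definition Dconst :: "nat \<Rightarrow> nat \<Rightarrow> nat" where
  "Dconst m l = (\<Prod>p\<in>{p. prime p \<and> p \<le> m}.
      p ^ ((m div p) * multiplicity p (fact l) - multiplicity p l))"

end

theory Submission
  imports Defs
begin

lemma legendre_step:
  fixes p :: nat assumes p: "prime p"
  shows "multiplicity p (fact j :: nat) = j div p + multiplicity p (fact (j div p) :: nat)"
proof (induction j)
  case 0
  then show ?case by simp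
next
  case (Suc j)
  have p0: "p > 1" using p prime_gt_1_nat by blast
  have fs: "fact (Suc n) = (Suc n) * (fact n :: nat)" for n by (simp add: fact_Suc)
  have A: "multiplicity p (fact (Suc j) :: nat) = multiplicity p (Suc j) + multiplicity p (fact j :: nat)"
    unfolding fs by (rule prime_elem_multiplicity_mult_distrib) (use p in auto)
  show ?case
  proof (cases "p dvd Suc j")
    case True
    define q where "q = j div p"
    have sq: "Suc j div p = Suc q" unfolding q_def using True
      by (subst div_Suc) (simp add: dvd_eq_mod_eq_0)
    have sj: "Suc j = p * Suc q" using dvd_mult_div_cancel[OF True] sq by simp
    have B: "multiplicity p (Suc j) = Suc (multiplicity p (Suc q))"
      unfolding sj by (rule multiplicity_times_same) (use p0 in auto)
    have C: "multiplicity p (fact (Suc q) :: nat) = multiplicity p (Suc q) + multiplicity p (fact q :: nat)"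
      unfolding fs by (rule prime_elem_multiplicity_mult_distrib) (use p in auto)
    have IH': "multiplicity p (fact j :: nat) = q + multiplicity p (fact q :: nat)" using Suc.IH unfolding q_def .
    have "multiplicity p (fact (Suc j) :: nat) = Suc q + multiplicity p (fact (Suc q) :: nat)"
      using A B C IH' by linarith
    then show ?thesis by (simp only: sq)
  next
    case False
    have "Suc j div p = j div p" using False
      by (subst div_Suc) (simp add: dvd_eq_mod_eq_0)
    then show ?thesis using False Suc A
      by (simp add: not_dvd_imp_multiplicity_0)
  qed
qed

lemma mult_fact_le:
  fixes p :: nat assumes p: "prime p"
  shows "multiplicity p (fact j :: nat) \<le> j"
proof (induction j rule: less_induct)
  case (less j)
  have p0: "p > 1" using p prime_gt_1_nat by blast
  show ?case
  proof (cases "j = 0")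
    case True then show ?thesis by simp
  next
    case False
    have lt: "j div p < j" using False p0 by simp
    have "multiplicity p (fact j :: nat) = j div p + multiplicity p (fact (j div p) :: nat)"
      by (rule legendre_step[OF p])
    also have "\<dots> \<le> j div p + j div p" using less[OF lt] by simp
    also have "\<dots> \<le> p * (j div p)" using p0
      using mult_le_mono1[of 2 p "j div p"] by linarith
    also have "\<dots> \<le> j" by simp
    finally show ?thesis .
  qed
qed


definition goodp :: "nat \<Rightarrow> nat \<Rightarrow> int poly \<Rightarrow> bool" where
  "goodp p e Q \<longleftrightarrow> (\<forall>i. int p ^ e dvd fact i * coeff Q i)"

lemma fact_split_int:
  assumes "j \<le> i"
  shows "(fact i :: int) = of_nat (i choose j) * fact j * fact (i - j)"
proof -
  have "of_nat (fact j * fact (i - j) * (i choose j)) = (of_nat (fact i) :: int)"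
    using binomial_fact_lemma[OF assms] by simp
  then show ?thesis by (simp add: of_nat_fact algebra_simps)
qed

lemma goodp_mult:
  assumes "goodp p a Q" "goodp p b R"
  shows "goodp p (a + b) (Q * R)"
  unfolding goodp_def
proof
  fix i
  have "fact i * coeff (Q * R) i = (\<Sum>j\<le>i. fact i * (coeff Q j * coeff R (i - j)))"
    by (simp add: coeff_mult sum_distrib_left)
  also have "\<dots> = (\<Sum>j\<le>i. of_nat (i choose j) * ((fact j * coeff Q j) * (fact (i - j) * coeff R (i - j))))"
    by (intro sum.cong refl) (simp add: fact_split_int)
  finally have eq: "fact i * coeff (Q * R) i = \<dots>" .
  have "int p ^ (a + b) dvd of_nat (i choose j) * ((fact j * coeff Q j) * (fact (i - j) * coeff R (i - j)))" for j
  proof -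
    have "int p ^ a * int p ^ b dvd (fact j * coeff Q j) * (fact (i - j) * coeff R (i - j))"
      using assms unfolding goodp_def by (intro mult_dvd_mono) auto
    then show ?thesis by (simp add: power_add)
  qed
  then show "int p ^ (a + b) dvd fact i * coeff (Q * R) i"
    unfolding eq by (intro dvd_sum) auto
qed

lemma goodp_one: "goodp p 0 Q"
  unfolding goodp_def by simp

lemma goodp_mono: "goodp p a Q \<Longrightarrow> b \<le> a \<Longrightarrow> goodp p b Q"
  unfolding goodp_def by (meson dvd_trans le_imp_power_dvd)

lemma goodp_prod:
  assumes "finite A" "\<And>h. h \<in> A \<Longrightarrow> goodp p (e h) (Q h)"
  shows "goodp p (\<Sum>h\<in>A. e h) (\<Prod>h\<in>A. Q h)"
  using assms
proof (induction A rule: finite_induct)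
  case empty
  then show ?case by (simp add: goodp_one)
next
  case (insert x F)
  then show ?case by (simp add: goodp_mult)
qed

lemma coeff_lin_pow_gt:
  fixes a b :: int
  assumes "n < i"
  shows "coeff ([:a, b:] ^ n) i = 0"
proof -
  have "degree ([:a, b:] ^ n) \<le> n"
    by (rule order.trans[OF degree_power_le]) (simp add: degree_pCons_le)
  then show ?thesis using assms by (intro coeff_eq_0) simp
qed

lemma goodp_zero_factor:
  assumes p: "prime p"
  shows "goodp p (multiplicity p (fact n :: nat)) ([:0, -1:] ^ n)"
  unfolding goodp_def
proof
  fix i
  have d: "int p ^ multiplicity p (fact n :: nat) dvd fact n"
  proof -
    have "p ^ multiplicity p (fact n :: nat) dvd (fact n :: nat)" by (rule multiplicity_dvd)
    then have "int (p ^ multiplicity p (fact n :: nat)) dvd int (fact n)" by (simp only: int_dvd_int_iff)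
    then show ?thesis by (simp add: of_nat_fact)
  qed
  show "int p ^ multiplicity p (fact n :: nat) dvd fact i * coeff ([:0, -1:] ^ n) i"
  proof (cases "n < i")
    case True then show ?thesis by (simp add: coeff_lin_pow_gt)
  next
    case False
    then have c: "coeff ([:0::int, -1:] ^ n) i = of_nat (n choose i) * (-1) ^ i * 0 ^ (n - i)"
      by (intro coeff_linear_poly_power) simp
    show ?thesis
    proof (cases "i = n")
      case True then show ?thesis using c d by simp
    next
      case False2: False
      then show ?thesis using c False by (simp add: power_0_left)
    qed
  qed
qed

lemma goodp_mult_factor:
  assumes p: "prime p" and h: "p dvd h" "h > 0"
  shows "goodp p (multiplicity p (fact n :: nat)) ([:int h, -1:] ^ n)"
  unfolding goodp_def
proof
  fix i
  show "int p ^ multiplicity p (fact n :: nat) dvd fact i * coeff ([:int h, -1:] ^ n) i"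
  proof (cases "n < i")
    case True then show ?thesis by (simp add: coeff_lin_pow_gt)
  next
    case False
    then have c: "coeff ([:int h, -1:] ^ n) i = of_nat (n choose i) * (-1) ^ i * int h ^ (n - i)"
      by (intro coeff_linear_poly_power) simp
    define X :: nat where "X = fact i * (n choose i)"
    define j where "j = n - i"
    have X0: "X \<noteq> 0" using False unfolding X_def by simp
    have XF: "X * fact j = fact n" unfolding X_def j_def using binomial_fact_lemma[of i n] False
      by (simp add: algebra_simps)
    have "multiplicity p (fact n :: nat) = multiplicity p X + multiplicity p (fact j :: nat)"
      unfolding XF[symmetric] by (rule prime_elem_multiplicity_mult_distrib) (use p X0 in auto)
    also have "\<dots> \<le> multiplicity p X + j" using mult_fact_le[OF p, of j] by simp
    finally have le: "multiplicity p (fact n :: nat) \<le> multiplicity p X + j" .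
    have "p ^ (multiplicity p X + j) dvd X * h ^ j"
      unfolding power_add by (intro mult_dvd_mono multiplicity_dvd dvd_power_same h)
    then have "p ^ multiplicity p (fact n :: nat) dvd X * h ^ j"
      using le by (meson dvd_trans le_imp_power_dvd)
    then have "int (p ^ multiplicity p (fact n :: nat)) dvd int (X * h ^ j)"
      by (simp only: int_dvd_int_iff)
    then have "int p ^ multiplicity p (fact n :: nat) dvd fact i * (of_nat (n choose i) * int h ^ (n - i))"
      unfolding X_def j_def by (simp add: of_nat_fact algebra_simps)
    then have "int p ^ multiplicity p (fact n :: nat) dvd (fact i * (of_nat (n choose i) * int h ^ (n - i))) * (-1) ^ i"
      by simp
    then show ?thesis unfolding c by (simp add: algebra_simps)
  qed
qed


lemma card_multiples:
  fixes p m :: nat assumes "p > 0"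
  shows "card {h\<in>{0..m}. p dvd h} = m div p + 1"
proof -
  have eq: "{h\<in>{0..m}. p dvd h} = (\<lambda>t. p * t) ` {0..m div p}"
  proof (intro equalityI subsetI)
    fix h assume "h \<in> {h\<in>{0..m}. p dvd h}"
    then obtain t where t: "h = p * t" "p * t \<le> m" by auto
    then have "t \<le> m div p" using assms less_eq_div_iff_mult_less_eq by (simp add: mult.commute)
    then show "h \<in> (\<lambda>t. p * t) ` {0..m div p}" using t by auto
  next
    fix h assume "h \<in> (\<lambda>t. p * t) ` {0..m div p}"
    then obtain t where t0: "t \<in> {0..m div p}" "h = p * t" by (rule imageE)
    then have t: "h = p * t" "t \<le> m div p" by auto
    then have "t * p \<le> m" using assms less_eq_div_iff_mult_less_eq by blast
    then show "h \<in> {h\<in>{0..m}. p dvd h}" using t by (auto simp: mult.commute)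
  qed
  have "inj_on (\<lambda>t. p * t) {0..m div p}" using assms by (auto simp: inj_on_def)
  then show ?thesis unfolding eq by (simp add: card_image)
qed

lemma P_good:
  fixes p m l k :: nat assumes p: "prime p"
  shows "goodp p (\<Sum>h\<in>{0..m}. if p dvd h then multiplicity p (fact (lexp l k h) :: nat) else 0) (Pkj m l k 0)"
proof -
  have "goodp p (\<Sum>h\<in>{0..m}. if p dvd h then multiplicity p (fact (lexp l k h) :: nat) else 0)
          (\<Prod>h\<in>{0..m}. [: int h, -1 :] ^ lexp l k h)"
  proof (rule goodp_prod)
    fix h assume "h \<in> {0..m}"
    show "goodp p (if p dvd h then multiplicity p (fact (lexp l k h) :: nat) else 0) ([:int h, - 1:] ^ lexp l k h)"
    proof (cases "p dvd h")
      case True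
      show ?thesis
      proof (cases "h = 0")
        case True then show ?thesis using goodp_zero_factor[OF p] by simp
      next
        case False then show ?thesis using goodp_mult_factor[OF p \<open>p dvd h\<close>] True by simp
      qed
    next
      case False then show ?thesis by (simp add: goodp_one)
    qed
  qed simp
  then show ?thesis unfolding Pkj_def by simp
qed

lemma sum_bound:
  fixes p m l k :: nat assumes p: "prime p" and l: "l \<ge> 1"
  shows "multiplicity p (fact (l - 1) :: nat) + ((m div p) * multiplicity p (fact l :: nat) - multiplicity p l)
     \<le> (\<Sum>h\<in>{0..m}. if p dvd h then multiplicity p (fact (lexp l k h) :: nat) else 0)"
proof -
  define v where "v = multiplicity p (fact l :: nat)"
  define w where "w = multiplicity p l"
  define u where "u = multiplicity p (fact (l - 1) :: nat)"
  define T where "T = {h\<in>{0..m}. p dvd h}"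
  have p0: "p > 0" using p prime_gt_0_nat by blast
  have F1: "v = w + u"
  proof -
    have "fact l = l * (fact (l - 1) :: nat)" using l by (cases l) auto
    then show ?thesis unfolding v_def w_def u_def using l p
      by (simp add: prime_elem_multiplicity_mult_distrib)
  qed
  have F2: "multiplicity p (fact (lexp l k h) :: nat) + (if h = k then w else 0) = v" for h
    using F1 by (simp add: lexp_def u_def v_def)
  have sumT: "(\<Sum>h\<in>{0..m}. if p dvd h then multiplicity p (fact (lexp l k h) :: nat) else 0)
     = (\<Sum>h\<in>T. multiplicity p (fact (lexp l k h) :: nat))"
    unfolding T_def by (rule sum.inter_filter[symmetric]) simp
  have fin: "finite T" unfolding T_def by simp
  have "(\<Sum>h\<in>T. multiplicity p (fact (lexp l k h) :: nat)) + (\<Sum>h\<in>T. if h = k then w else 0) = (\<Sum>h\<in>T. v)"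
    unfolding sum.distrib[symmetric] using F2 by simp
  also have "\<dots> = (m div p) * v + v" unfolding T_def using card_multiples[OF p0, of m] by simp
  finally have E: "(\<Sum>h\<in>T. multiplicity p (fact (lexp l k h) :: nat)) + (\<Sum>h\<in>T. if h = k then w else 0) = (m div p) * v + v" .
  have "(\<Sum>h\<in>T. if h = k then w else 0) \<le> w" using fin by (simp add: sum.delta)
  then show ?thesis using E F1 unfolding sumT u_def[symmetric] v_def[symmetric] w_def[symmetric]
    by linarith
qed

lemma mult_Dconst_le:
  fixes p m l :: nat assumes p: "prime p"
  shows "multiplicity p (Dconst m l) \<le> (m div p) * multiplicity p (fact l :: nat) - multiplicity p l"
  unfolding Dconst_def by (subst multiplicity_prod_prime_powers) (use p in auto)

lemma Dconst_pos: "Dconst m l > 0"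
  unfolding Dconst_def by (intro prod_pos) (auto simp: prime_gt_0_nat)

lemma main_dvd:
  assumes l: "l \<ge> 1"
  shows "int (fact (l - 1) * Dconst m l) dvd fact x * coeff (Pkj m l k 0) x"
proof -
  define y where "y = fact x * coeff (Pkj m l k 0) x"
  define N where "N = fact (l - 1) * Dconst m l"
  have N0: "N \<noteq> 0" unfolding N_def using Dconst_pos[of m l] by simp
  have "N dvd nat \<bar>y\<bar>"
  proof (cases "nat \<bar>y\<bar> = 0")
    case True then show ?thesis by simp
  next
    case False
    show ?thesis
    proof (rule multiplicity_le_imp_dvd[OF N0])
      fix p :: nat assume p: "prime p"
      have "multiplicity p N = multiplicity p (fact (l - 1) :: nat) + multiplicity p (Dconst m l)"
        unfolding N_def by (rule prime_elem_multiplicity_mult_distrib) (use p Dconst_pos[of m l] in auto)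
      also have "\<dots> \<le> (\<Sum>h\<in>{0..m}. if p dvd h then multiplicity p (fact (lexp l k h) :: nat) else 0)"
        using sum_bound[OF p l, where m=m and k=k] mult_Dconst_le[OF p, where m=m and l=l] by linarith
      finally have le: "multiplicity p N \<le> \<dots>" .
      have "int p ^ (\<Sum>h\<in>{0..m}. if p dvd h then multiplicity p (fact (lexp l k h) :: nat) else 0) dvd y"
        using P_good[OF p, where m=m and l=l and k=k] unfolding goodp_def y_def by blast
      then have "int p ^ multiplicity p N dvd y" using le by (meson dvd_trans le_imp_power_dvd)
      then have "int (p ^ multiplicity p N) dvd int (nat \<bar>y\<bar>)" by simp
      then have "p ^ multiplicity p N dvd nat \<bar>y\<bar>" by (simp only: int_dvd_int_iff)
      then show "multiplicity p N \<le> multiplicity p (nat \<bar>y\<bar>)"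
        using multiplicity_geI[of "nat \<bar>y\<bar>" p "multiplicity p N"] False p not_prime_unit by blast
    qed
  qed
  then have "int N dvd int (nat \<bar>y\<bar>)" by (simp only: int_dvd_int_iff)
  then show ?thesis unfolding N_def[symmetric] y_def[symmetric] by simp
qed

theorem theorem6p1:
  fixes m l k :: nat
  assumes "m \<ge> 1" and "l \<ge> 1" and "k \<le> m"
  shows "\<forall>i. coeff (smult (1 / of_nat (Dconst m l)) (Bstar m l k 0)) i \<in> \<int>"
proof
  fix i
  define N where "N = fact (l - 1) * Dconst m l"
  have N0: "N \<noteq> 0" unfolding N_def using Dconst_pos[of m l] by simp
  have trm: "(of_nat (fact x) * of_int (sigma m l k 0 x)) / (of_nat N :: rat) \<in> \<int>" for x
  proof -
    obtain c where c: "fact x * coeff (Pkj m l k 0) x = int N * c"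
      using main_dvd[OF assms(2), of m x k] unfolding N_def by (auto elim: dvdE)
    have "(of_nat (fact x) * of_int (sigma m l k 0 x) :: rat) = of_int (fact x * coeff (Pkj m l k 0) x)"
      unfolding sigma_def by (simp add: of_int_fact)
    also have "\<dots> = of_nat N * of_int c" unfolding c by simp
    finally show ?thesis using N0 by simp
  qed
  have "coeff (smult (1 / of_nat (Dconst m l)) (Bstar m l k 0)) i =
    (\<Sum>x\<in>{0..bigL m l}. if bigL m l - x = i then (of_nat (fact x) * of_int (sigma m l k 0 x)) / of_nat N else 0)"
    unfolding Bstar_def N_def by (simp add: coeff_sum sum_distrib_left if_distrib of_nat_mult field_simps cong: if_cong)
  also have "\<dots> \<in> \<int>" using trm by (intro Ints_sum) auto
  finally show "coeff (smult (1 / of_nat (Dconst m l)) (Bstar m l k 0)) i \<in> \<int>" .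
qed

end
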